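(* Let $n\ge 2$. Every strongly connected closed simplicial complex of dimension $n$ of type $\{3,4\}$ is spherical, i.e. its geometric realization is homeomorphic to the $n$-sphere.
   Context: An (abstract) simplicial complex of dimension $n$ is a family of finite nonempty sets closed under taking nonempty subsets and under nonempty intersections, whose maximal members ($n$-faces) all have cardinality $n+1$. It is closed if every $(n-1)$-face lies in exactly two $n$-faces, and strongly connected if any two $n$-faces can be joined by a sequence of $n$-faces in which consecutive ones share an $(n-1)$-face. It is of type $\{3,4\}$ if every $(n-2)$-face lies in exactly $3$ or $4$ $n$-faces. *)

theory Defs
  imports "HOL-Analysis.Analysis"
begin

definition simplicial_complex :: "'v set set \<Rightarrow> bool" where
  "simplicial_complex K \<longleftrightarrow>
     (\<forall>\<sigma>\<in>K. finite \<sigma> \<and> \<sigma> \<noteq> {}) \<and>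
     (\<forall>\<sigma>\<in>K. \<forall>\<tau>. \<tau> \<subseteq> \<sigma> \<and> \<tau> \<noteq> {} \<longrightarrow> \<tau> \<in> K) \<and>
     (\<forall>\<sigma>\<in>K. \<forall>\<tau>\<in>K. \<sigma> \<inter> \<tau> \<noteq> {} \<longrightarrow> \<sigma> \<inter> \<tau> \<in> K)"

definition facet :: "'v set set \<Rightarrow> 'v set \<Rightarrow> bool" where
  "facet K \<sigma> \<longleftrightarrow> \<sigma> \<in> K \<and> (\<forall>\<tau>\<in>K. \<sigma> \<subseteq> \<tau> \<longrightarrow> \<tau> = \<sigma>)"

definition sc_of_dim :: "'v set set \<Rightarrow> nat \<Rightarrow> bool" where
  "sc_of_dim K n \<longleftrightarrow> simplicial_complex K \<and> K \<noteq> {} \<and>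
     (\<forall>\<sigma>\<in>K. card \<sigma> \<le> n + 1) \<and> (\<forall>\<sigma>. facet K \<sigma> \<longrightarrow> card \<sigma> = n + 1)"

definition n_faces_containing :: "'v set set \<Rightarrow> nat \<Rightarrow> 'v set \<Rightarrow> 'v set set" where
  "n_faces_containing K n \<tau> = {\<sigma>\<in>K. card \<sigma> = n + 1 \<and> \<tau> \<subseteq> \<sigma>}"

definition closed_complex :: "'v set set \<Rightarrow> nat \<Rightarrow> bool" where
  "closed_complex K n \<longleftrightarrow>
     (\<forall>\<tau>\<in>K. card \<tau> = n \<longrightarrow> card (n_faces_containing K n \<tau>) = 2)"

definition adjacent_facets :: "'v set set \<Rightarrow> nat \<Rightarrow> 'v set \<Rightarrow> 'v set \<Rightarrow> bool" where
  "adjacent_facets K n \<sigma> \<tau> \<longleftrightarrow>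
     \<sigma> \<in> K \<and> \<tau> \<in> K \<and> card \<sigma> = n + 1 \<and> card \<tau> = n + 1 \<and> card (\<sigma> \<inter> \<tau>) = n"

definition strongly_connected :: "'v set set \<Rightarrow> nat \<Rightarrow> bool" where
  "strongly_connected K n \<longleftrightarrow>
     (\<forall>\<sigma>\<in>K. \<forall>\<tau>\<in>K. card \<sigma> = n + 1 \<and> card \<tau> = n + 1 \<longrightarrow>
        (adjacent_facets K n)\<^sup>*\<^sup>* \<sigma> \<tau>)"

definition type_3_4 :: "'v set set \<Rightarrow> nat \<Rightarrow> bool" where
  "type_3_4 K n \<longleftrightarrow>
     (\<forall>\<rho>\<in>K. card \<rho> = n - 1 \<longrightarrow> card (n_faces_containing K n \<rho>) \<in> {3, 4})"

text \<open>Geometric realization: barycentric-coordinate functions 'v \<Rightarrow> real supported on a face,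
  with the coherent (weak) topology w.r.t. the closed simplices, each carrying the
  Euclidean (product) topology.\<close>

definition gsimplex :: "'v set \<Rightarrow> ('v \<Rightarrow> real) set" where
  "gsimplex \<sigma> = {\<alpha>. (\<forall>v. 0 \<le> \<alpha> v) \<and> (\<forall>v. v \<notin> \<sigma> \<longrightarrow> \<alpha> v = 0) \<and> sum \<alpha> \<sigma> = 1}"

definition realization_set :: "'v set set \<Rightarrow> ('v \<Rightarrow> real) set" where
  "realization_set K = (\<Union>\<sigma>\<in>K. gsimplex \<sigma>)"

definition realization_open :: "'v set set \<Rightarrow> ('v \<Rightarrow> real) set \<Rightarrow> bool" where
  "realization_open K U \<longleftrightarrow> U \<subseteq> realization_set K \<and>
     (\<forall>\<sigma>\<in>K. openin (subtopology (powertop_real UNIV) (gsimplex \<sigma>)) (U \<inter> gsimplex \<sigma>))"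

lemma istopology_realization_open: "istopology (realization_open K)"
  unfolding istopology_def
proof (intro conjI allI impI)
  fix S T assume "realization_open K S" "realization_open K T"
  then show "realization_open K (S \<inter> T)"
  proof -
    have "S \<inter> T \<inter> gsimplex \<sigma> = (S \<inter> gsimplex \<sigma>) \<inter> (T \<inter> gsimplex \<sigma>)" for \<sigma> by blast
    then show ?thesis using \<open>realization_open K S\<close> \<open>realization_open K T\<close>
      unfolding realization_open_def by (simp add: openin_Int) blast
  qed
next
  fix \<F> assume A: "\<forall>S\<in>\<F>. realization_open K S"
  show "realization_open K (\<Union>\<F>)"
    unfolding realization_open_def
  proof (intro conjI ballI)
    show "\<Union>\<F> \<subseteq> realization_set K" using A by (auto simp: realization_open_def)
  next
    fix \<sigma> assume "\<sigma> \<in> K"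
    then have "\<forall>U\<in>(\<lambda>S. S \<inter> gsimplex \<sigma>) ` \<F>. openin (subtopology (powertop_real UNIV) (gsimplex \<sigma>)) U"
      using A by (auto simp: realization_open_def)
    then have "openin (subtopology (powertop_real UNIV) (gsimplex \<sigma>)) (\<Union>((\<lambda>S. S \<inter> gsimplex \<sigma>) ` \<F>))"
      by (intro openin_Union) blast
    then show "openin (subtopology (powertop_real UNIV) (gsimplex \<sigma>)) (\<Union>\<F> \<inter> gsimplex \<sigma>)"
      by (metis Int_Union2 Int_commute)
  qed
qed

definition geometric_realization :: "'v set set \<Rightarrow> ('v \<Rightarrow> real) topology" where
  "geometric_realization K = topology (realization_open K)"

end

theory Submission
  imports Defs
begin


lemma topspace_P [simp]: "topspace (powertop_real UNIV) = UNIV"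
  by simp

lemma gsimplex_closed:
  assumes "finite \<sigma>"
  shows "closedin (powertop_real UNIV) (gsimplex \<sigma>)"
proof -
  define A where "A v = {\<alpha>::'a\<Rightarrow>real. \<alpha> v \<in> (if v \<in> \<sigma> then {0..} else {0})}" for v
  have cA: "closedin (powertop_real UNIV) (A v)" for v
  proof -
    have "closedin euclideanreal (if v \<in> \<sigma> then {0..} else {0})"
      by (simp add: closed_closedin[symmetric])
    from closedin_continuous_map_preimage[OF continuous_map_product_projection[of v UNIV "\<lambda>i. euclideanreal"] this]
    show ?thesis unfolding A_def by simp
  qed
  have cS: "closedin (powertop_real UNIV) {\<alpha>::'a\<Rightarrow>real. sum \<alpha> \<sigma> \<in> {1}}"
  proof -
    have "continuous_map (powertop_real UNIV) euclideanreal (\<lambda>\<alpha>::'a\<Rightarrow>real. sum \<alpha> \<sigma>)"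
      using assms by (intro continuous_map_sum) (auto intro: continuous_map_product_projection)
    from closedin_continuous_map_preimage[OF this, of "{1}"] show ?thesis by simp
  qed
  have eq: "gsimplex \<sigma> = (\<Inter>v. A v) \<inter> {\<alpha>. sum \<alpha> \<sigma> \<in> {1}}"
    unfolding gsimplex_def A_def apply (auto split: if_splits) by (metis order_refl)
  show ?thesis unfolding eq
    by (intro closedin_Int closedin_Inter) (use cA cS in auto)
qed

lemma gsimplex_compact:
  assumes "finite \<sigma>"
  shows "compactin (powertop_real UNIV) (gsimplex \<sigma>)"
proof (rule closed_compactin[OF _ _ gsimplex_closed[OF assms]])
  show "compactin (powertop_real UNIV) (PiE UNIV (\<lambda>_. {0..1}))"
    by (simp add: compactin_PiE)
  show "gsimplex \<sigma> \<subseteq> PiE UNIV (\<lambda>_. {0..1})"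
  proof
    fix \<alpha> assume a: "\<alpha> \<in> gsimplex \<sigma>"
    have "\<alpha> v \<le> 1" for v
    proof (cases "v \<in> \<sigma>")
      case True
      then have "\<alpha> v \<le> sum \<alpha> \<sigma>" using a assms by (intro member_le_sum) (auto simp: gsimplex_def)
      then show ?thesis using a by (simp add: gsimplex_def)
    next
      case False then show ?thesis using a by (simp add: gsimplex_def)
    qed
    then show "\<alpha> \<in> PiE UNIV (\<lambda>_. {0..1})" using a by (auto simp: gsimplex_def)
  qed
qed

lemma geom_eq:
  assumes "finite K" "\<forall>\<sigma>\<in>K. finite \<sigma>"
  shows "geometric_realization K = subtopology (powertop_real UNIV) (realization_set K)"
  unfolding topology_eq
proof
  fix U
  have o: "openin (geometric_realization K) U = realization_open K U"
    unfolding geometric_realization_def by (simp add: topology_inverse'[OF istopology_realization_open])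
  show "openin (geometric_realization K) U = openin (subtopology (powertop_real UNIV) (realization_set K)) U"
    unfolding o
  proof
    assume r: "realization_open K U"
    then have UR: "U \<subseteq> realization_set K" unfolding realization_open_def by blast
    have "closedin (powertop_real UNIV) (gsimplex \<sigma> - U)" if "\<sigma> \<in> K" for \<sigma>
    proof -
      have "openin (subtopology (powertop_real UNIV) (gsimplex \<sigma>)) (U \<inter> gsimplex \<sigma>)"
        using r that unfolding realization_open_def by blast
      then have "closedin (subtopology (powertop_real UNIV) (gsimplex \<sigma>)) (gsimplex \<sigma> - (U \<inter> gsimplex \<sigma>))"
        by (metis closedin_diff closedin_topspace inf_top.left_neutral topspace_P topspace_subtopology)
      then show ?thesis
        using closedin_trans_full gsimplex_closed assms that by (metis Diff_Int2 Diff_Int_distrib2 inf.idem)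
    qed
    then have "closedin (powertop_real UNIV) (\<Union>\<sigma>\<in>K. gsimplex \<sigma> - U)"
      using assms by (intro closedin_Union) auto
    moreover have "(\<Union>\<sigma>\<in>K. gsimplex \<sigma> - U) = realization_set K - U"
      unfolding realization_set_def by blast
    ultimately have c: "closedin (powertop_real UNIV) (realization_set K - U)" by simp
    show "openin (subtopology (powertop_real UNIV) (realization_set K)) U"
      unfolding openin_subtopology
      by (rule exI[of _ "UNIV - (realization_set K - U)"]) (use c UR in \<open>auto simp: openin_closedin_eq double_diff\<close>)
  next
    assume o: "openin (subtopology (powertop_real UNIV) (realization_set K)) U"
    then obtain T where T: "openin (powertop_real UNIV) T" "U = T \<inter> realization_set K"
      unfolding openin_subtopology by blast
    show "realization_open K U"
      unfolding realization_open_def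
    proof (intro conjI ballI)
      show "U \<subseteq> realization_set K" using T by blast
      fix \<sigma> assume "\<sigma> \<in> K"
      then have "U \<inter> gsimplex \<sigma> = T \<inter> gsimplex \<sigma>" using T unfolding realization_set_def by blast
      then show "openin (subtopology (powertop_real UNIV) (gsimplex \<sigma>)) (U \<inter> gsimplex \<sigma>)"
        unfolding openin_subtopology using T by blast
    qed
  qed
qed

lemma realization_compact:
  assumes "finite K" "\<forall>\<sigma>\<in>K. finite \<sigma>"
  shows "compactin (powertop_real UNIV) (realization_set K)"
  unfolding realization_set_def using assms
  by (intro compactin_Union) (auto intro: gsimplex_compact)



lemma sc_parts1: "sc_of_dim K n \<Longrightarrow> \<forall>\<sigma>\<in>K. finite \<sigma> \<and> \<sigma> \<noteq> {}"
  unfolding sc_of_dim_def simplicial_complex_def by (elim conjE) assumption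
lemma sc_parts2: "sc_of_dim K n \<Longrightarrow> \<forall>\<sigma>\<in>K. \<forall>\<tau>. \<tau> \<subseteq> \<sigma> \<and> \<tau> \<noteq> {} \<longrightarrow> \<tau> \<in> K"
  unfolding sc_of_dim_def simplicial_complex_def by (elim conjE) assumption
lemma sc_parts3: "sc_of_dim K n \<Longrightarrow> K \<noteq> {}"
  unfolding sc_of_dim_def by (elim conjE) assumption
lemma sc_parts4: "sc_of_dim K n \<Longrightarrow> \<forall>\<sigma>\<in>K. card \<sigma> \<le> n + 1"
  unfolding sc_of_dim_def by (elim conjE) assumption
lemma sc_parts5: "sc_of_dim K n \<Longrightarrow> \<forall>\<sigma>. facet K \<sigma> \<longrightarrow> card \<sigma> = n + 1"
  unfolding sc_of_dim_def by (elim conjE) assumption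

locale tc =
  fixes K :: "'v set set" and n :: nat
  assumes n2: "n \<ge> 2" and sc: "sc_of_dim K n" and cl: "closed_complex K n"
    and scon: "strongly_connected K n" and ty: "type_3_4 K n"
begin

lemma K_fin: "\<sigma> \<in> K \<Longrightarrow> finite \<sigma>"
  using sc_parts1[OF sc] by simp
lemma K_ne: "\<sigma> \<in> K \<Longrightarrow> \<sigma> \<noteq> {}"
  using sc_parts1[OF sc] by simp
lemma K_sub: "\<sigma> \<in> K \<Longrightarrow> \<tau> \<subseteq> \<sigma> \<Longrightarrow> \<tau> \<noteq> {} \<Longrightarrow> \<tau> \<in> K"
  using sc_parts2[OF sc] by blast
lemma K_card: "\<sigma> \<in> K \<Longrightarrow> card \<sigma> \<le> n + 1"
  using sc_parts4[OF sc] by simp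
lemma K_nonempty: "K \<noteq> {}"
  using sc_parts3[OF sc] .
lemma facet_card: "facet K \<sigma> \<Longrightarrow> card \<sigma> = n + 1"
  using sc_parts5[OF sc] by simp

lemma in_facet:
  assumes "\<sigma> \<in> K" shows "\<exists>G\<in>K. card G = n + 1 \<and> \<sigma> \<subseteq> G"
proof -
  have b: "\<forall>y. y \<in> K \<and> \<sigma> \<subseteq> y \<longrightarrow> card y < n+2" using K_card by (auto simp: less_Suc_eq_le)
  obtain G where G: "G \<in> K \<and> \<sigma> \<subseteq> G" "\<forall>y. y \<in> K \<and> \<sigma> \<subseteq> y \<longrightarrow> card y \<le> card G"
    using ex_has_greatest_nat[of "\<lambda>G. G \<in> K \<and> \<sigma> \<subseteq> G" \<sigma> card "n+2", OF _ b] assms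
    by blast
  have "facet K G"
    unfolding facet_def
  proof (intro conjI ballI impI)
    show "G \<in> K" using G by auto
    fix \<tau> assume "\<tau> \<in> K" "G \<subseteq> \<tau>"
    moreover have "card \<tau> \<le> card G" using G \<open>\<tau> \<in> K\<close> \<open>G \<subseteq> \<tau>\<close> by auto
    ultimately show "\<tau> = G" using K_fin by (intro card_seteq[symmetric]) auto
  qed
  then have "card G = n + 1" by (rule facet_card)
  then show ?thesis using G by auto
qed

lemma ridge_three:
  assumes "\<rho> \<in> K" "card \<rho> = n" "A \<in> K" "B \<in> K" "C \<in> K"
    "card A = n+1" "card B = n+1" "card C = n+1" "\<rho> \<subseteq> A" "\<rho> \<subseteq> B" "\<rho> \<subseteq> C"
  shows "A = B \<or> A = C \<or> B = C"
proof (rule ccontr)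
  assume d: "\<not> ?thesis"
  have c2: "card (n_faces_containing K n \<rho>) = 2" using cl assms by (auto simp: closed_complex_def)
  then have fin: "finite (n_faces_containing K n \<rho>)" by (metis card.infinite zero_neq_numeral)
  have "{A,B,C} \<subseteq> n_faces_containing K n \<rho>" using assms by (auto simp: n_faces_containing_def)
  then have "card {A,B,C} \<le> 2" using c2 fin by (metis card_mono)
  moreover have "card {A,B,C} = 3" using d by auto
  ultimately show False by simp
qed

lemma ridge_other:
  assumes "\<rho> \<in> K" "card \<rho> = n" "A \<in> K" "card A = n+1" "\<rho> \<subseteq> A"
  shows "\<exists>B\<in>K. card B = n+1 \<and> \<rho> \<subseteq> B \<and> B \<noteq> A"
proof -
  have c2: "card (n_faces_containing K n \<rho>) = 2" using cl assms by (auto simp: closed_complex_def)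
  have "A \<in> n_faces_containing K n \<rho>" using assms by (auto simp: n_faces_containing_def)
  moreover have "finite (n_faces_containing K n \<rho>)" using c2 card.infinite by fastforce
  ultimately have "card (n_faces_containing K n \<rho> - {A}) = 1" using c2 by (simp add: card_Diff_singleton)
  then have "n_faces_containing K n \<rho> - {A} \<noteq> {}" by (metis card.empty zero_neq_one)
  then show ?thesis by (auto simp: n_faces_containing_def)
qed

lemma N_le4:
  assumes "\<rho> \<in> K" "card \<rho> = n - 1"
  shows "finite (n_faces_containing K n \<rho>) \<and> card (n_faces_containing K n \<rho>) \<le> 4"
proof -
  have "card (n_faces_containing K n \<rho>) \<in> {3,4}" using ty assms by (auto simp: type_3_4_def)
  moreover then have "card (n_faces_containing K n \<rho>) \<noteq> 0" by auto
  ultimately show ?thesis using card.infinite by fastforce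
qed

lemma insert_shape:
  assumes "finite A" "card A = Suc k" "\<rho> \<subseteq> A" "card \<rho> = k"
  shows "\<exists>x. x \<notin> \<rho> \<and> A = insert x \<rho>"
proof -
  have "card (A - \<rho>) = 1" using assms by (simp add: card_Diff_subset finite_subset)
  then obtain x where "A - \<rho> = {x}" by (meson card_1_singletonE)
  then show ?thesis using assms(3) by blast
qed

end

locale tc2 = tc K n for K :: "'v set set" and n +
  fixes F assumes F_K: "F \<in> K" and F_card: "card F = n+1"
begin

lemma F_fin: "finite F" using F_K K_fin by blast

lemma opp_ex: assumes "v \<in> F" shows "\<exists>x. x \<notin> F \<and> insert x (F - {v}) \<in> K"
proof -
  have c: "card (F - {v}) = n" using assms F_card F_fin by simp
  then have ne: "F - {v} \<noteq> {}" using n2 by (metis card.empty not_numeral_le_zero)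
  have r: "F - {v} \<in> K" using K_sub[OF F_K _ ne] by blast
  obtain B where B: "B \<in> K" "card B = n+1" "F - {v} \<subseteq> B" "B \<noteq> F"
    using ridge_other[OF r c F_K F_card] by blast
  obtain x where x: "x \<notin> F - {v}" "B = insert x (F - {v})"
    using insert_shape[of B n "F - {v}"] B c K_fin by auto
  have "x \<noteq> v" using x B assms by (metis insert_Diff)
  then show ?thesis using x B by auto
qed

definition opp where "opp v = (SOME x. x \<notin> F \<and> insert x (F - {v}) \<in> K)"

lemma opp: "v \<in> F \<Longrightarrow> opp v \<notin> F \<and> insert (opp v) (F - {v}) \<in> K"
  unfolding opp_def using opp_ex by (rule someI_ex) 

definition "W = opp ` F"
definition "V = F \<union> W"
definition "blk b = (if b \<in> F then opp b else b)"
definition "B w = {b\<in>V. blk b = w}"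
definition "cand G \<longleftrightarrow> G \<subseteq> V \<and> (\<forall>w\<in>W. \<exists>!m. m \<in> B w \<and> m \<notin> G)"
definition "Inv G \<longleftrightarrow> G \<in> K \<and> card G = n+1 \<and> cand G \<and>
   (\<forall>v\<in>G. \<forall>m. m \<in> B (blk v) \<longrightarrow> m \<notin> G \<longrightarrow> insert m (G - {v}) \<in> K)"

lemma finV: "finite V" unfolding V_def W_def using F_fin by simp
lemma WF: "W \<inter> F = {}" unfolding W_def using opp by auto
lemma blk_W: "b \<in> V \<Longrightarrow> blk b \<in> W" unfolding V_def blk_def W_def by auto
lemma in_B: "b \<in> V \<Longrightarrow> b \<in> B (blk b)" unfolding B_def by auto
lemma B_V: "B w \<subseteq> V" unfolding B_def by auto
lemma blk_B: "b \<in> B w \<Longrightarrow> blk b = w" unfolding B_def by auto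
lemma blk_Wid: "w \<in> W \<Longrightarrow> blk w = w" unfolding blk_def using WF by auto

lemma cand_swap:
  assumes "cand G" "v \<in> G" "m \<in> B (blk v)" "m \<notin> G"
  shows "cand (insert m (G - {v}))"
  unfolding cand_def
proof (intro conjI ballI)
  show "insert m (G - {v}) \<subseteq> V" using assms B_V unfolding cand_def by auto
  fix w assume w: "w \<in> W"
  have vV: "v \<in> V" using assms unfolding cand_def by auto
  have vm: "v \<noteq> m" using assms by auto
  show "\<exists>!x. x \<in> B w \<and> x \<notin> insert m (G - {v})"
  proof (cases "w = blk v")
    case True
    show ?thesis
    proof (rule ex1I[of _ v])
      show "v \<in> B w \<and> v \<notin> insert m (G - {v})" using True in_B[OF vV] vm by auto
      fix x assume x: "x \<in> B w \<and> x \<notin> insert m (G - {v})"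
      show "x = v"
      proof (rule ccontr)
        assume "x \<noteq> v"
        then have "x \<notin> G" "x \<noteq> m" using x by auto
        then show False using assms(1) w x assms(3,4) True unfolding cand_def by blast
      qed
    qed
  next
    case False
    obtain x0 where x0: "x0 \<in> B w" "x0 \<notin> G" using assms(1) w unfolding cand_def by blast
    have "x0 \<noteq> m" using x0 assms(3) False blk_B by metis
    show ?thesis
    proof (rule ex1I[of _ x0])
      show "x0 \<in> B w \<and> x0 \<notin> insert m (G - {v})" using x0 \<open>x0 \<noteq> m\<close> by auto
      fix x assume x: "x \<in> B w \<and> x \<notin> insert m (G - {v})"
      have "x \<noteq> v" using x False blk_B by metis
      then have "x \<notin> G" using x by auto
      then show "x = x0" using assms(1) w x x0 unfolding cand_def by blast
    qed
  qed
qed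

lemma cand_unique: assumes "cand G" "x \<in> B w" "x \<notin> G" "y \<in> B w" "y \<notin> G" shows "x = y"
proof -
  have "x \<in> V" using assms(2) B_V by blast
  then have "w \<in> W" using blk_W[OF \<open>x \<in> V\<close>] blk_B[OF assms(2)] by simp
  then show ?thesis using assms unfolding cand_def by blast
qed

lemma Inv_F: "Inv F"
  unfolding Inv_def
proof (intro conjI ballI allI impI)
  show "F \<in> K" "card F = n+1" by (rule F_K, rule F_card)
  have cF: "cand F" unfolding cand_def
  proof (intro conjI ballI)
    show "F \<subseteq> V" unfolding V_def by auto
    fix w assume w: "w \<in> W"
    show "\<exists>!m. m \<in> B w \<and> m \<notin> F"
    proof (rule ex1I[of _ w])
      show "w \<in> B w \<and> w \<notin> F" using w WF blk_Wid unfolding B_def V_def by auto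
      fix m assume "m \<in> B w \<and> m \<notin> F"
      then show "m = w" unfolding B_def V_def using blk_Wid by auto
    qed
  qed
  then show "cand F" .
  fix v m assume v: "v \<in> F" and m: "m \<in> B (blk v)" "m \<notin> F"
  have "opp v \<in> B (blk v)" "opp v \<notin> F" using v opp unfolding B_def V_def W_def blk_def by auto
  then have "m = opp v" using cand_unique[OF cF] m by blast
  then show "insert m (F - {v}) \<in> K" using opp v by auto
qed


lemma Inv_step:
  assumes I: "Inv G" and v: "v \<in> G" and m: "m \<in> B (blk v)" "m \<notin> G"
  shows "Inv (insert m (G - {v}))"
proof -
  define G' where "G' = insert m (G - {v})"
  have GK: "G \<in> K" and Gc: "card G = n+1" and cG: "cand G"
    and IK: "\<And>v m. v \<in> G \<Longrightarrow> m \<in> B (blk v) \<Longrightarrow> m \<notin> G \<Longrightarrow> insert m (G - {v}) \<in> K"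
    using I unfolding Inv_def by auto
  have Gf: "finite G" using GK K_fin by blast
  have GV: "G \<subseteq> V" using cG unfolding cand_def by auto
  have vm: "v \<noteq> m" using v m by auto
  have G'K: "G' \<in> K" using IK v m unfolding G'_def by blast
  have G'c: "card G' = n+1" unfolding G'_def using Gf Gc v m by simp
  have cG': "cand G'" unfolding G'_def by (rule cand_swap[OF cG v m])
  have blkm: "blk m = blk v" using m blk_B by blast
  have miss_v: "x = v" if "x \<in> B (blk v)" "x \<notin> G'" for x
  proof (rule ccontr)
    assume "x \<noteq> v"
    then have "x \<notin> G" "x \<noteq> m" using that unfolding G'_def by auto
    then show False using cand_unique[OF cG that(1) _ m(1) m(2)] by blast
  qed
  have "\<forall>u\<in>G'. \<forall>m'. m' \<in> B (blk u) \<longrightarrow> m' \<notin> G' \<longrightarrow> insert m' (G' - {u}) \<in> K"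
  proof (intro ballI allI impI)
    fix u m' assume u: "u \<in> G'" and m': "m' \<in> B (blk u)" "m' \<notin> G'"
    show "insert m' (G' - {u}) \<in> K"
    proof (cases "u = m")
      case True
      then have "m' = v" using miss_v m' blkm by auto
      moreover have "insert v (G' - {m}) = G" unfolding G'_def using v m by auto
      ultimately show ?thesis using True GK by simp
    next
      case False
      then have uG: "u \<in> G" and uv: "u \<noteq> v" using u unfolding G'_def by auto
      show ?thesis
      proof (cases "blk u = blk v")
        case True
        then have "m' = v" using miss_v m' by auto
        moreover have "insert v (G' - {u}) = insert m (G - {u})" unfolding G'_def using v uv False by auto
        moreover have "insert m (G - {u}) \<in> K" using IK[OF uG] m True by auto
        ultimately show ?thesis by simp
      next
        case bd: False
        have m'v: "m' \<noteq> v" using m' bd blk_B by metis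
        have m'm: "m' \<noteq> m" using m' bd blkm blk_B by metis
        have m'G: "m' \<notin> G" using m' m'v unfolding G'_def by auto
        have uw: "u \<noteq> m'" using uG m'G by auto
        define H where "H = insert m' (G - {u})"
        have HK: "H \<in> K" unfolding H_def using IK[OF uG m'(1) m'G] .
        have Hc: "card H = n+1" unfolding H_def using Gf Gc uG m'G by simp
        define R where "R = G - {u, v}"
        have Rc: "card R = n - 1" unfolding R_def using Gf Gc uG v uv by (simp add: card_Diff_subset)
        have "n - 1 \<noteq> 0" using n2 by simp
        then have Rne: "R \<noteq> {}" using Rc by auto
        have RK: "R \<in> K" using K_sub[OF GK _ Rne] unfolding R_def by blast
        have Rf: "finite R" using RK K_fin by blast
        have mR: "m \<notin> R" "m' \<notin> R" using m m'G unfolding R_def by auto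
        define \<rho>1 where "\<rho>1 = insert m R"
        have r1c: "card \<rho>1 = n" unfolding \<rho>1_def using Rf Rc mR n2 by simp
        have r1G': "\<rho>1 \<subseteq> G'" unfolding \<rho>1_def R_def G'_def by auto
        have r1K: "\<rho>1 \<in> K" using K_sub[OF G'K r1G'] unfolding \<rho>1_def by blast
        obtain X where X: "X \<in> K" "card X = n+1" "\<rho>1 \<subseteq> X" "X \<noteq> G'"
          using ridge_other[OF r1K r1c G'K G'c r1G'] by blast
        define \<rho>2 where "\<rho>2 = insert m' R"
        have r2c: "card \<rho>2 = n" unfolding \<rho>2_def using Rf Rc mR n2 by simp
        have r2H: "\<rho>2 \<subseteq> H" unfolding \<rho>2_def R_def H_def by auto
        have r2K: "\<rho>2 \<in> K" using K_sub[OF HK r2H] unfolding \<rho>2_def by blast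
        obtain Y where Y: "Y \<in> K" "card Y = n+1" "\<rho>2 \<subseteq> Y" "Y \<noteq> H"
          using ridge_other[OF r2K r2c HK Hc r2H] by blast
        define N where "N = n_faces_containing K n R"
        have N4: "finite N" "card N \<le> 4" using N_le4[OF RK Rc] unfolding N_def by auto
        have RG: "R \<subseteq> G" "R \<subseteq> G'" "R \<subseteq> H" "R \<subseteq> X" "R \<subseteq> Y"
          using r1G' r2H X(3) Y(3) unfolding \<rho>1_def \<rho>2_def R_def by blast+
        have inN: "G \<in> N" "G' \<in> N" "H \<in> N" "X \<in> N" "Y \<in> N"
          unfolding N_def n_faces_containing_def using GK Gc G'K G'c HK Hc X(1,2) Y(1,2) RG
          by blast+
        have d1: "G \<noteq> G'" using m unfolding G'_def by auto
        have d2: "G \<noteq> H" using m'G unfolding H_def by auto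
        have d3: "G \<noteq> X" using X(3) m unfolding \<rho>1_def by auto
        have d4: "G' \<noteq> H" using u uw unfolding H_def by auto
        have d6: "H \<noteq> X" using X(3) m'm m(2) unfolding \<rho>1_def H_def by auto
        have c4: "card {G, G', H, X} = 4" using d1 d2 d3 d4 d6 X(4) by auto
        have sub4: "{G, G', H, X} \<subseteq> N" using inN by auto
        have "{G, G', H, X} = N" using card_seteq[OF N4(1) sub4] c4 N4(2) by simp
        then have "Y \<in> {G, G', H, X}" using inN by auto
        moreover have "Y \<noteq> G" "Y \<noteq> G'" using Y(3) m'G m'm m'v unfolding \<rho>2_def G'_def by auto
        ultimately have "Y = X" using Y(4) by auto
        then have sub: "insert m' (insert m R) \<subseteq> X" using X(3) Y(3) unfolding \<rho>1_def \<rho>2_def by auto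
        have "card (insert m' (insert m R)) = n+1" using Rf Rc mR m'm n2 by simp
        moreover have "finite X" using X(1) K_fin by blast
        ultimately have "insert m' (insert m R) = X"
          using card_seteq[OF _ sub] X(2) by simp
        then have "X = insert m' (insert m R)" by simp
        moreover have "insert m' (G' - {u}) = insert m' (insert m R)"
          unfolding G'_def R_def using False uw by auto
        ultimately show ?thesis using X(1) by simp
      qed
    qed
  qed
  then show ?thesis unfolding Inv_def G'_def[symmetric] using G'K G'c cG' by blast
qed

lemma Inv_adj:
  assumes I: "Inv G" and a: "adjacent_facets K n G G2"
  shows "Inv G2"
proof -
  have GK: "G \<in> K" and Gc: "card G = n+1" and cG: "cand G"
    and IK: "\<And>v m. v \<in> G \<Longrightarrow> m \<in> B (blk v) \<Longrightarrow> m \<notin> G \<Longrightarrow> insert m (G - {v}) \<in> K"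
    using I unfolding Inv_def by auto
  have G2: "G2 \<in> K" "card G2 = n+1" "card (G \<inter> G2) = n" using a unfolding adjacent_facets_def by auto
  have Gf: "finite G" using GK K_fin by blast
  have GS: "card G = Suc n" using Gc by simp
  have sub: "G \<inter> G2 \<subseteq> G" by blast
  obtain v where v: "v \<notin> G \<inter> G2" "G = insert v (G \<inter> G2)"
    using insert_shape[OF Gf GS sub G2(3)] by blast
  have vG: "v \<in> G" using v by blast
  have vV: "v \<in> V" using vG cG unfolding cand_def by blast
  obtain m where m: "m \<in> B (blk v)" "m \<notin> G" using cG blk_W[OF vV] unfolding cand_def by blast
  have rho: "G \<inter> G2 = G - {v}" using v by blast
  have "n \<noteq> 0" using n2 by simp
  then have ne: "G \<inter> G2 \<noteq> {}" using G2(3) by (metis card.empty)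
  have rK: "G \<inter> G2 \<in> K" using K_sub[OF GK sub ne] .
  have G'K: "insert m (G - {v}) \<in> K" using IK[OF vG m] .
  have G'c: "card (insert m (G - {v})) = n+1" using Gf Gc vG m by simp
  have "G \<noteq> G2"
  proof
    assume "G = G2"
    then have "card (G \<inter> G2) = card G" by simp
    then show False using G2(3) Gc by simp
  qed
  moreover have "G \<noteq> insert m (G - {v})" using m by blast
  moreover have s2: "G \<inter> G2 \<subseteq> insert m (G - {v})" using rho by blast
  moreover have s3: "G \<inter> G2 \<subseteq> G2" by blast
  ultimately have "insert m (G - {v}) = G2"
    using ridge_three[OF rK G2(3) GK G'K G2(1) Gc G'c G2(2) sub s2 s3] by blast
  then show ?thesis using Inv_step[OF I vG m] by simp
qed

lemma facet_Inv: assumes "G \<in> K" "card G = n+1" shows "Inv G"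
proof -
  have "(adjacent_facets K n)\<^sup>*\<^sup>* F G" using scon assms F_K F_card unfolding strongly_connected_def by blast
  then show ?thesis
    by (induction rule: rtranclp_induct) (auto intro: Inv_F Inv_adj)
qed

lemma cand_Inv_aux: "cand G \<Longrightarrow> card (G \<inter> W) = k \<Longrightarrow> Inv G"
proof (induction k arbitrary: G)
  case 0
  have GV: "G \<subseteq> V" using 0 unfolding cand_def by auto
  have fin: "finite (G \<inter> W)" using GV finV by (meson finite_Int finite_subset)
  then have GW: "G \<inter> W = {}" using 0 by simp
  have "G = F"
  proof
    show "G \<subseteq> F" using GV GW unfolding V_def by auto
    show "F \<subseteq> G"
    proof
      fix v assume vF: "v \<in> F"
      show "v \<in> G"
      proof (rule ccontr)
        assume "v \<notin> G"
        have vV: "v \<in> V" using vF unfolding V_def by auto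
        have oW: "opp v \<in> W" using vF unfolding W_def by auto
        have "opp v \<in> B (blk v)" using oW vF opp[OF vF] unfolding B_def V_def blk_def by auto
        moreover have "opp v \<notin> G" using oW GW by auto
        ultimately have "v = opp v" using cand_unique[OF 0(1) in_B[OF vV] \<open>v \<notin> G\<close>] by blast
        then show False using opp vF by metis
      qed
    qed
  qed
  then show ?case using Inv_F by simp
next
  case (Suc k)
  have GV: "G \<subseteq> V" using Suc unfolding cand_def by auto
  have "G \<inter> W \<noteq> {}" using Suc(3) by auto
  then obtain w where w: "w \<in> G" "w \<in> W" by blast
  obtain m where m: "m \<in> B w" "m \<notin> G" using Suc(2) w unfolding cand_def by blast
  have bw: "blk w = w" using blk_Wid w by blast
  have mF: "m \<in> F"
  proof (rule ccontr)
    assume "m \<notin> F"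
    then have "m \<in> W" using m B_V unfolding V_def by auto
    then have "m = w" using m blk_Wid blk_B by metis
    then show False using m w by auto
  qed
  define G0 where "G0 = insert m (G - {w})"
  have cG0: "cand G0" unfolding G0_def using cand_swap[OF Suc(2) w(1) _ m(2)] m bw by simp
  have "G0 \<inter> W = G \<inter> W - {w}" unfolding G0_def using mF WF by auto
  moreover have "finite (G \<inter> W)" using GV finV by (meson finite_Int finite_subset)
  ultimately have "card (G0 \<inter> W) = k" using Suc(3) w by simp
  then have I0: "Inv G0" using Suc.IH cG0 by blast
  have "blk m = w" using m blk_B by blast
  moreover have "w \<in> V" using w GV by blast
  ultimately have wB: "w \<in> B (blk m)" using in_B bw by metis
  have wm: "w \<notin> G0" "m \<in> G0" using w m unfolding G0_def by auto
  have "Inv (insert w (G0 - {m}))" using Inv_step[OF I0 wm(2) wB wm(1)] .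
  moreover have "insert w (G0 - {m}) = G" unfolding G0_def using w m by auto
  ultimately show ?case by simp
qed

lemma cand_Inv: "cand G \<Longrightarrow> Inv G" using cand_Inv_aux by blast

lemma K_char: "\<sigma> \<in> K \<longleftrightarrow> \<sigma> \<noteq> {} \<and> (\<exists>G. cand G \<and> \<sigma> \<subseteq> G)"
proof
  assume "\<sigma> \<in> K"
  moreover obtain G where "G \<in> K" "card G = n + 1" "\<sigma> \<subseteq> G" using in_facet[OF \<open>\<sigma> \<in> K\<close>] by blast
  moreover then have "cand G" using facet_Inv unfolding Inv_def by blast
  ultimately show "\<sigma> \<noteq> {} \<and> (\<exists>G. cand G \<and> \<sigma> \<subseteq> G)" using K_ne by blast
next
  assume "\<sigma> \<noteq> {} \<and> (\<exists>G. cand G \<and> \<sigma> \<subseteq> G)"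
  then show "\<sigma> \<in> K" using cand_Inv K_sub unfolding Inv_def by blast
qed

end


context tc2
begin

definition "Sset = {\<alpha>::'v\<Rightarrow>real. (\<forall>v. 0 \<le> \<alpha> v) \<and> (\<forall>v. v \<notin> V \<longrightarrow> \<alpha> v = 0) \<and> sum \<alpha> V = 1 \<and> (\<forall>w\<in>W. \<exists>b\<in>B w. \<alpha> b = 0)}"

lemma K_Pow: "K \<subseteq> Pow V"
proof
  fix \<sigma> assume "\<sigma> \<in> K"
  then obtain G where "cand G" "\<sigma> \<subseteq> G" using K_char[THEN iffD1] by blast
  then show "\<sigma> \<in> Pow V" unfolding cand_def by blast
qed

lemma K_finite: "finite K" using K_Pow finV finite_subset by (simp add: finite_subset)

lemma real_char: "realization_set K = Sset"
proof
  show "realization_set K \<subseteq> Sset"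
  proof
    fix \<alpha> assume "\<alpha> \<in> realization_set K"
    then obtain \<sigma> where s: "\<sigma> \<in> K" "\<alpha> \<in> gsimplex \<sigma>" unfolding realization_set_def by blast
    then obtain G where G: "cand G" "\<sigma> \<subseteq> G" using K_char[THEN iffD1] by blast
    have GV: "G \<subseteq> V" using G unfolding cand_def by blast
    have a: "\<forall>v. 0 \<le> \<alpha> v" "\<forall>v. v \<notin> \<sigma> \<longrightarrow> \<alpha> v = 0" "sum \<alpha> \<sigma> = 1" using s unfolding gsimplex_def by auto
    have "sum \<alpha> V = sum \<alpha> \<sigma>" using a G GV finV by (intro sum.mono_neutral_right) auto
    moreover have "\<forall>w\<in>W. \<exists>b\<in>B w. \<alpha> b = 0"
    proof
      fix w assume "w \<in> W"
      then obtain m where "m \<in> B w" "m \<notin> G" using G unfolding cand_def by blast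
      then show "\<exists>b\<in>B w. \<alpha> b = 0" using a G by blast
    qed
    ultimately show "\<alpha> \<in> Sset" unfolding Sset_def using a G GV by auto
  qed
next
  show "Sset \<subseteq> realization_set K"
  proof
    fix \<alpha> assume a: "\<alpha> \<in> Sset"
    have sum1: "sum \<alpha> V = 1" and nn: "\<forall>v. 0 \<le> \<alpha> v" and off: "\<forall>v. v \<notin> V \<longrightarrow> \<alpha> v = 0"
      and zz: "\<forall>w\<in>W. \<exists>b\<in>B w. \<alpha> b = 0"
      using a unfolding Sset_def by blast+
    define \<sigma> where "\<sigma> = {v\<in>V. \<alpha> v \<noteq> 0}"
    define z where "z w = (SOME b. b \<in> B w \<and> \<alpha> b = 0)" for w
    have z: "z w \<in> B w \<and> \<alpha> (z w) = 0" if "w \<in> W" for w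
    proof -
      have "\<exists>b. b \<in> B w \<and> \<alpha> b = 0" using zz that by blast
      then show ?thesis unfolding z_def by (rule someI_ex)
    qed
    define G where "G = V - z ` W"
    have cG: "cand G" unfolding cand_def
    proof (intro conjI ballI)
      show "G \<subseteq> V" unfolding G_def by blast
      fix w assume w: "w \<in> W"
      show "\<exists>!m. m \<in> B w \<and> m \<notin> G"
      proof (rule ex1I[of _ "z w"])
        have "z w \<notin> G" unfolding G_def using w by blast
        then show "z w \<in> B w \<and> z w \<notin> G" using z[OF w] by blast
        fix x assume x: "x \<in> B w \<and> x \<notin> G"
        then have "x \<in> V" using B_V by blast
        then have "x \<in> z ` W" using x unfolding G_def by blast
        then obtain w' where w': "w' \<in> W" "x = z w'" by blast
        then have "blk x = w'" using z[OF w'(1)] blk_B by blast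
        moreover have "blk x = w" using x blk_B by blast
        ultimately show "x = z w" using w' by simp
      qed
    qed
    have "sum \<alpha> \<sigma> = sum \<alpha> V" unfolding \<sigma>_def using finV by (intro sum.mono_neutral_left) auto
    then have s1: "sum \<alpha> \<sigma> = 1" using sum1 by simp
    have "\<sigma> \<noteq> {}"
    proof
      assume "\<sigma> = {}"
      then have "sum \<alpha> \<sigma> = 0" by simp
      then show False using s1 by simp
    qed
    moreover have "\<sigma> \<subseteq> G"
    proof
      fix v assume v: "v \<in> \<sigma>"
      then have vV: "v \<in> V" and nz: "\<alpha> v \<noteq> 0" unfolding \<sigma>_def by auto
      have "v \<notin> z ` W"
      proof
        assume "v \<in> z ` W"
        then obtain w where "w \<in> W" "v = z w" by blast
        then show False using z nz by blast
      qed
      then show "v \<in> G" unfolding G_def using vV by blast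
    qed
    ultimately have "\<sigma> \<in> K" using K_char[THEN iffD2] cG by blast
    moreover have "\<alpha> \<in> gsimplex \<sigma>"
    proof -
      have "\<forall>v. v \<notin> \<sigma> \<longrightarrow> \<alpha> v = 0" using off unfolding \<sigma>_def by blast
      then show ?thesis unfolding gsimplex_def using nn s1 by blast
    qed
    ultimately show "\<alpha> \<in> realization_set K" unfolding realization_set_def by blast
  qed
qed

end


context tc2
begin

lemma enum_ex: "\<exists>e. bij_betw e {..n} F"
proof -
  obtain h where "bij_betw h {0..<card F} F" using ex_bij_betw_nat_finite[OF F_fin] by blast
  moreover have "{0..<card F} = {..n}" using F_card by auto
  ultimately show ?thesis by auto
qed

definition "enum = (SOME e. bij_betw e {..n} F)"
definition "einv = inv_into {..n} enum"

lemma enum_bij: "bij_betw enum {..n} F"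
  unfolding enum_def using enum_ex by (rule someI_ex)

lemma enum_in: "i \<le> n \<Longrightarrow> enum i \<in> F"
  using enum_bij by (auto simp: bij_betw_def)

lemma einv: "v \<in> F \<Longrightarrow> einv v \<le> n \<and> enum (einv v) = v"
  unfolding einv_def using enum_bij
  by (metis atMost_iff bij_betw_imp_surj_on f_inv_into_f inv_into_into)

lemma einv_enum: "i \<le> n \<Longrightarrow> einv (enum i) = i"
  unfolding einv_def using enum_bij by (simp add: bij_betw_def)

definition "D \<alpha> i = (if i \<le> n then \<alpha> (enum i) - \<alpha> (opp (enum i)) else (0::real))"
definition "nrm \<alpha> = sqrt (\<Sum>i\<le>n. (D \<alpha> i)^2)"
definition "fmap \<alpha> = (\<lambda>i. D \<alpha> i / nrm \<alpha>)"

lemma blk_const: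
  assumes "\<forall>v\<in>F. \<gamma> v = \<gamma> (opp v)" "b \<in> V"
  shows "\<gamma> b = \<gamma> (blk b)"
  using assms unfolding blk_def by auto

lemma Sset_block_zero:
  assumes "\<alpha> \<in> Sset" "\<forall>v\<in>F. \<alpha> v = \<alpha> (opp v)" "b \<in> V"
  shows "\<alpha> b = 0"
proof -
  have w: "blk b \<in> W" using blk_W[OF assms(3)] .
  obtain c where c: "c \<in> B (blk b)" "\<alpha> c = 0" using assms(1) w unfolding Sset_def by blast
  have "\<alpha> c = \<alpha> (blk c)" using blk_const[OF assms(2)] c B_V by blast
  moreover have "blk c = blk b" using c blk_B by blast
  ultimately show ?thesis using blk_const[OF assms(2,3)] c by simp
qed

lemma D_nz: assumes "\<alpha> \<in> Sset" shows "\<exists>i\<le>n. D \<alpha> i \<noteq> 0"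
proof (rule ccontr)
  assume "\<not> ?thesis"
  then have h: "\<forall>i\<le>n. D \<alpha> i = 0" by blast
  have "\<forall>v\<in>F. \<alpha> v = \<alpha> (opp v)"
  proof
    fix v assume "v \<in> F"
    then have "D \<alpha> (einv v) = 0" "einv v \<le> n" "enum (einv v) = v" using h einv by auto
    then show "\<alpha> v = \<alpha> (opp v)" unfolding D_def by simp
  qed
  then have "\<forall>b\<in>V. \<alpha> b = 0" using Sset_block_zero[OF assms] by blast
  then have "sum \<alpha> V = 0" by simp
  then show False using assms unfolding Sset_def by simp
qed

lemma nrm_pos: assumes "\<alpha> \<in> Sset" shows "nrm \<alpha> > 0"
proof -
  obtain i where i: "i \<le> n" "D \<alpha> i \<noteq> 0" using D_nz[OF assms] by blast
  have "0 < (D \<alpha> i)^2" using i by simp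
  also have "\<dots> \<le> (\<Sum>i\<le>n. (D \<alpha> i)^2)" using i by (intro member_le_sum) auto
  finally show ?thesis unfolding nrm_def by simp
qed

lemma fmap_sphere: assumes "\<alpha> \<in> Sset"
  shows "(\<Sum>i\<le>n. (fmap \<alpha> i)^2) = 1 \<and> (\<forall>i>n. fmap \<alpha> i = 0)"
proof
  have p: "nrm \<alpha> > 0" using nrm_pos[OF assms] .
  have sq: "(nrm \<alpha>)^2 = (\<Sum>i\<le>n. (D \<alpha> i)^2)" unfolding nrm_def
    by (simp add: sum_nonneg)
  have "(\<Sum>i\<le>n. (fmap \<alpha> i)^2) = (\<Sum>i\<le>n. (D \<alpha> i)^2) / (nrm \<alpha>)^2"
    unfolding fmap_def by (simp add: power_divide sum_divide_distrib)
  also have "\<dots> = (nrm \<alpha>)^2 / (nrm \<alpha>)^2" using sq by simp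
  also have "\<dots> = 1" using p by simp
  finally show "(\<Sum>i\<le>n. (fmap \<alpha> i)^2) = 1" .
  show "\<forall>i>n. fmap \<alpha> i = 0" unfolding fmap_def D_def by simp
qed


lemma fmap_inj: "inj_on fmap Sset"
proof (rule inj_onI)
  fix \<alpha> \<beta> assume a: "\<alpha> \<in> Sset" and b: "\<beta> \<in> Sset" and eq: "fmap \<alpha> = fmap \<beta>"
  define t where "t = nrm \<alpha> / nrm \<beta>"
  have pa: "nrm \<alpha> > 0" and pb: "nrm \<beta> > 0" using nrm_pos a b by auto
  have tpos: "t > 0" unfolding t_def using pa pb by simp
  have Dt: "D \<alpha> i = t * D \<beta> i" for i
  proof -
    have "D \<alpha> i / nrm \<alpha> = D \<beta> i / nrm \<beta>" using fun_cong[OF eq, of i] unfolding fmap_def by simp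
    then show ?thesis unfolding t_def using pa pb by (simp add: field_simps)
  qed
  define \<gamma> where "\<gamma> v = \<alpha> v - t * \<beta> v" for v
  have gF: "\<forall>v\<in>F. \<gamma> v = \<gamma> (opp v)"
  proof
    fix v assume v: "v \<in> F"
    have "D \<alpha> (einv v) = t * D \<beta> (einv v)" by (rule Dt)
    then have "\<alpha> v - \<alpha> (opp v) = t * (\<beta> v - \<beta> (opp v))" using einv[OF v] unfolding D_def by simp
    then show "\<gamma> v = \<gamma> (opp v)" unfolding \<gamma>_def by (simp add: algebra_simps)
  qed
  have gW: "\<gamma> w = 0" if w: "w \<in> W" for w
  proof -
    obtain c where c: "c \<in> B w" "\<alpha> c = 0" using a w unfolding Sset_def by blast
    obtain c' where c': "c' \<in> B w" "\<beta> c' = 0" using b w unfolding Sset_def by blast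
    have cV: "c \<in> V" "c' \<in> V" using c c' B_V by blast+
    have "\<gamma> c = \<gamma> (blk c)" using blk_const[OF gF cV(1)] .
    moreover have "blk c = w" using c blk_B by blast
    ultimately have 1: "\<gamma> w = - t * \<beta> c" using c(2) unfolding \<gamma>_def by simp
    have "\<gamma> c' = \<gamma> (blk c')" using blk_const[OF gF cV(2)] .
    moreover have "blk c' = w" using c' blk_B by blast
    ultimately have 2: "\<gamma> w = \<alpha> c'" using c'(2) unfolding \<gamma>_def by simp
    have "\<beta> c \<ge> 0" "\<alpha> c' \<ge> 0" using a b unfolding Sset_def by blast+
    moreover have "t * \<beta> c \<ge> 0" using tpos calculation(1) by simp
    ultimately show ?thesis using 1 2 by linarith
  qed
  have gV: "\<alpha> v = t * \<beta> v" if "v \<in> V" for v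
  proof -
    have "\<gamma> v = \<gamma> (blk v)" using blk_const[OF gF that] .
    then have "\<gamma> v = 0" using gW blk_W[OF that] by simp
    then show ?thesis unfolding \<gamma>_def by simp
  qed
  have "sum \<alpha> V = t * sum \<beta> V" using gV by (simp add: sum_distrib_left)
  then have t1: "t = 1" using a b unfolding Sset_def by simp
  show "\<alpha> = \<beta>"
  proof
    fix v show "\<alpha> v = \<beta> v"
    proof (cases "v \<in> V")
      case True then show ?thesis using gV t1 by simp
    next
      case False then show ?thesis using a b unfolding Sset_def by simp
    qed
  qed
qed


lemma B_fin: "finite (B w)" using B_V finV finite_subset by blast
lemma B_ne: "w \<in> W \<Longrightarrow> w \<in> B w"
  using blk_Wid unfolding B_def V_def by auto

lemma fmap_surj:
  assumes x1: "(\<Sum>i\<le>n. (x i)^2) = 1" and x0: "\<forall>i>n. x i = 0"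
  shows "\<exists>\<alpha>\<in>Sset. fmap \<alpha> = x"
proof -
  define y where "y v = (if v \<in> F then x (einv v) else 0)" for v
  define \<mu> where "\<mu> w = Min (y ` B w)" for w
  define \<alpha>0 where "\<alpha>0 v = (if v \<in> V then y v - \<mu> (blk v) else 0)" for v
  define s where "s = sum \<alpha>0 V"
  define \<alpha> where "\<alpha> v = \<alpha>0 v / s" for v
  have a0nn: "\<alpha>0 v \<ge> 0" for v
  proof (cases "v \<in> V")
    case True
    then have "v \<in> B (blk v)" by (rule in_B)
    then have "\<mu> (blk v) \<le> y v" unfolding \<mu>_def using B_fin by (intro Min_le) auto
    then show ?thesis unfolding \<alpha>0_def using True by simp
  qed (simp add: \<alpha>0_def)
  have a0z: "\<exists>b\<in>B w. \<alpha>0 b = 0" if w: "w \<in> W" for w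
  proof -
    have "\<mu> w \<in> y ` B w" unfolding \<mu>_def using B_fin B_ne[OF w] by (intro Min_in) auto
    then obtain b where b: "b \<in> B w" "y b = \<mu> w" by (metis imageE)
    then have "blk b = w" "b \<in> V" using blk_B B_V by blast+
    then have "\<alpha>0 b = 0" unfolding \<alpha>0_def using b by simp
    then show ?thesis using b by blast
  qed
  have yopp: "y (opp v) = 0" if "v \<in> F" for v using opp[OF that] unfolding y_def by simp
  have oppV: "opp v \<in> V" "blk v = opp v" "blk (opp v) = opp v" if "v \<in> F" for v
    using that opp[OF that] unfolding V_def W_def blk_def by auto
  have Dv: "\<alpha>0 v - \<alpha>0 (opp v) = y v" if v: "v \<in> F" for v
  proof -
    have "v \<in> V" using v unfolding V_def by blast
    then show ?thesis unfolding \<alpha>0_def using oppV[OF v] yopp[OF v] by simp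
  qed
  have s0: "s \<ge> 0" unfolding s_def using a0nn by (simp add: sum_nonneg)
  have spos: "s > 0"
  proof (rule ccontr)
    assume "\<not> s > 0"
    then have "s = 0" using s0 by simp
    then have z: "\<forall>v\<in>V. \<alpha>0 v = 0" unfolding s_def using sum_nonneg_eq_0_iff[OF finV] a0nn by blast
    have "x i = 0" if i: "i \<le> n" for i
    proof -
      have v: "enum i \<in> F" using enum_in[OF i] .
      then have "enum i \<in> V" unfolding V_def by blast
      then have "y (enum i) = 0" using Dv[OF v] z oppV[OF v] by simp
      then show ?thesis unfolding y_def using v einv_enum[OF i] by simp
    qed
    then have "(\<Sum>i\<le>n. (x i)^2) = 0" by simp
    then show False using x1 by simp
  qed
  have aS: "\<alpha> \<in> Sset" unfolding Sset_def
  proof (intro CollectI conjI allI impI ballI)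
    show "0 \<le> \<alpha> v" for v unfolding \<alpha>_def using a0nn s0 by simp
    show "\<alpha> v = 0" if "v \<notin> V" for v unfolding \<alpha>_def \<alpha>0_def using that by simp
    show "sum \<alpha> V = 1" unfolding \<alpha>_def using spos by (simp add: sum_divide_distrib[symmetric] s_def)
    show "\<exists>b\<in>B w. \<alpha> b = 0" if "w \<in> W" for w using a0z[OF that] unfolding \<alpha>_def by auto
  qed
  have DA: "D \<alpha> i = x i / s" for i
  proof (cases "i \<le> n")
    case True
    have v: "enum i \<in> F" using enum_in[OF True] .
    have "D \<alpha> i = (\<alpha>0 (enum i) - \<alpha>0 (opp (enum i))) / s" unfolding D_def \<alpha>_def using True by (simp add: diff_divide_distrib)
    also have "\<dots> = y (enum i) / s" using Dv[OF v] by simp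
    also have "\<dots> = x i / s" unfolding y_def using v einv_enum[OF True] by simp
    finally show ?thesis .
  next
    case False then show ?thesis unfolding D_def using x0 by simp
  qed
  have "nrm \<alpha> = sqrt (\<Sum>i\<le>n. (x i)^2 / s^2)" unfolding nrm_def DA by (simp add: power_divide)
  also have "\<dots> = sqrt (1 / s^2)" using x1 by (simp add: sum_divide_distrib[symmetric])
  also have "\<dots> = 1 / s" using spos by (simp add: real_sqrt_divide)
  finally have N: "nrm \<alpha> = 1 / s" .
  have "fmap \<alpha> = x" unfolding fmap_def N DA using spos by (simp add: fun_eq_iff)
  then show ?thesis using aS by blast
qed


lemma proj_cont: "continuous_map (subtopology (powertop_real UNIV) S) euclideanreal (\<lambda>\<alpha>::'v\<Rightarrow>real. \<alpha> v)"
  by (rule continuous_map_from_subtopology[OF continuous_map_product_projection]) simp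

lemma D_cont: "continuous_map (subtopology (powertop_real UNIV) S) euclideanreal (\<lambda>\<alpha>. D \<alpha> i)"
proof (cases "i \<le> n")
  case True
  then have "(\<lambda>\<alpha>. D \<alpha> i) = (\<lambda>\<alpha>. \<alpha> (enum i) - \<alpha> (opp (enum i)))" unfolding D_def by auto
  then show ?thesis using continuous_map_diff[OF proj_cont proj_cont] by simp
next
  case False
  then have "(\<lambda>\<alpha>. D \<alpha> i) = (\<lambda>\<alpha>. 0)" unfolding D_def by auto
  then show ?thesis by simp
qed

lemma fmap_cont: "continuous_map (subtopology (powertop_real UNIV) Sset) (nsphere n) fmap"
  unfolding nsphere continuous_map_in_subtopology
proof
  show "continuous_map (subtopology (powertop_real UNIV) Sset) (powertop_real UNIV) fmap"
    unfolding continuous_map_componentwise_UNIV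
  proof
    fix k
    have "continuous_map (subtopology (powertop_real UNIV) Sset) euclideanreal nrm"
      unfolding nrm_def
      by (intro continuous_map_sqrt continuous_map_sum continuous_map_real_pow D_cont) simp
    then show "continuous_map (subtopology (powertop_real UNIV) Sset) euclideanreal (\<lambda>x. fmap x k)"
      unfolding fmap_def using nrm_pos
      by (intro continuous_map_real_divide D_cont) (auto, fastforce)
  qed
  show "fmap \<in> topspace (subtopology (powertop_real UNIV) Sset) \<rightarrow> {x. (\<Sum>i\<le>n. (x i)\<^sup>2) = 1 \<and> (\<forall>i>n. x i = 0)}"
    using fmap_sphere by auto
qed


end

theorem theorem2p3:
  fixes K :: "'v set set" and n :: nat
  assumes "n \<ge> 2"
    and "sc_of_dim K n"
    and "closed_complex K n"
    and "strongly_connected K n"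
    and "type_3_4 K n"
  shows "geometric_realization K homeomorphic_space nsphere n"
proof -
  interpret tc K n using assms by unfold_locales
  obtain F where F: "F \<in> K" "card F = n+1" using in_facet K_nonempty by blast
  interpret tc2 K n F using F by unfold_locales
  have fK: "\<forall>\<sigma>\<in>K. finite \<sigma>" using K_fin by blast
  have geq: "geometric_realization K = subtopology (powertop_real UNIV) Sset"
    using geom_eq[OF K_finite fK] real_char by simp
  have comp: "compact_space (subtopology (powertop_real UNIV) Sset)"
    using compact_space_subtopology realization_compact[OF K_finite fK] real_char by metis
  have haus: "Hausdorff_space (nsphere n)"
    unfolding nsphere by (intro Hausdorff_space_subtopology) (simp add: Hausdorff_space_product_topology)
  have img: "fmap ` topspace (subtopology (powertop_real UNIV) Sset) = topspace (nsphere n)"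
  proof
    show "fmap ` topspace (subtopology (powertop_real UNIV) Sset) \<subseteq> topspace (nsphere n)"
      using fmap_cont by (metis continuous_map_image_subset_topspace)
    show "topspace (nsphere n) \<subseteq> fmap ` topspace (subtopology (powertop_real UNIV) Sset)"
    proof
      fix x assume "x \<in> topspace (nsphere n)"
      then have "(\<Sum>i\<le>n. (x i)^2) = 1" "\<forall>i>n. x i = 0" unfolding nsphere by auto
      then obtain \<alpha> where "\<alpha> \<in> Sset" "fmap \<alpha> = x" using fmap_surj by blast
      then show "x \<in> fmap ` topspace (subtopology (powertop_real UNIV) Sset)" by auto
    qed
  qed
  have inj: "inj_on fmap (topspace (subtopology (powertop_real UNIV) Sset))"
    using fmap_inj by simp
  have "homeomorphic_map (subtopology (powertop_real UNIV) Sset) (nsphere n) fmap"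
    by (rule continuous_imp_homeomorphic_map[OF fmap_cont comp haus img inj])
  then show ?thesis unfolding geq by (rule homeomorphic_map_imp_homeomorphic_space)
qed

end
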